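(* Let $G=(V,E)$ with weight $\mu$ be an infinite, connected, locally finite weighted graph satisfying condition $(p_0)$, let $m>1$, and fix $o\in V$. Let $(p,q)\in G_2=\{(p,q)\in\mathbb R^2: q\ge m\}$. Suppose there exist constants $C>0$ and $n_1$ such that $$W_o(n)\le C\, n^{m}(\ln n)^{m-1}\quad\text{for all } n\ge n_1.$$ Then the inequality $\Delta_m u+u^p|\nabla u|^q\le 0$ on $V$ admits no nontrivial positive solution.
   Context: Setting: $G=(V,E)$ is an infinite, connected, locally finite graph with no loops and no multiple edges; $x\sim y$ means $x$ and $y$ are joined by an edge. A weight is a symmetric function $\mu:V\times V\to[0,\infty)$ with $\mu_{xy}=\mu_{yx}>0$ if and only if $x\sim y$; the vertex measure is $\mu(x)=\sum_{y\sim x}\mu_{xy}$. For $m>1$ and $u:V\to\mathbb R$, $\Delta_m u(x)=\frac{1}{\mu(x)}\sum_{y\sim x}\mu_{xy}|u(y)-u(x)|^{m-2}(u(y)-u(x))$ and $|\nabla u(x)|=\big(\sum_{y\sim x}\frac{\mu_{xy}}{2\mu(x)}(u(y)-u(x))^2\big)^{1/2}$. Condition $(p_0)$: there is a constant $p_0>1$ such that $\mu_{xy}/\mu(x)\ge 1/p_0$ for all $x\sim y$. $d(x,y)$ is the graph (shortest path) distance, $B(o,n)=\{x\in V: d(o,x)\le n\}$, and $W_o(n)=\sum_{x\in B(o,n),\,y\in V,\,d(o,x)<d(o,y)}\mu_{xy}$. A nontrivial positive solution of $\Delta_m u+u^p|\nabla u|^q\le 0$ is a non-constant function $u:V\to(0,\infty)$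 such that $\Delta_m u(x)+u(x)^p|\nabla u(x)|^q\le 0$ for every $x\in V$, with the conventions $0^0=1$, $0^q=0$ for $q>0$, and, for $q<0$, $|\nabla u(x)|^q=+\infty$ when $|\nabla u(x)|=0$ (so the inequality fails at such $x$). *)

theory Defs
  imports "HOL-Analysis.Analysis"
begin

definition weighted_graph :: "('v \<Rightarrow> 'v \<Rightarrow> bool) \<Rightarrow> ('v \<Rightarrow> 'v \<Rightarrow> real) \<Rightarrow> bool" where
  "weighted_graph adj mu \<longleftrightarrow>
     infinite (UNIV :: 'v set) \<and>
     (\<forall>x. \<not> adj x x) \<and>
     (\<forall>x y. adj x y \<longleftrightarrow> adj y x) \<and>
     (\<forall>x. finite {y. adj x y}) \<and>
     (\<forall>x y. (x, y) \<in> {(a, b). adj a b}\<^sup>*) \<and>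
     (\<forall>x y. mu x y = mu y x) \<and>
     (\<forall>x y. mu x y \<ge> 0) \<and>
     (\<forall>x y. mu x y > 0 \<longleftrightarrow> adj x y)"

definition vmeasure :: "('v \<Rightarrow> 'v \<Rightarrow> bool) \<Rightarrow> ('v \<Rightarrow> 'v \<Rightarrow> real) \<Rightarrow> 'v \<Rightarrow> real" where
  "vmeasure adj mu x = (\<Sum>y\<in>{y. adj x y}. mu x y)"

definition cond_p0 :: "('v \<Rightarrow> 'v \<Rightarrow> bool) \<Rightarrow> ('v \<Rightarrow> 'v \<Rightarrow> real) \<Rightarrow> bool" where
  "cond_p0 adj mu \<longleftrightarrow>
     (\<exists>p0::real. p0 > 1 \<and> (\<forall>x y. adj x y \<longrightarrow> mu x y / vmeasure adj mu x \<ge> 1 / p0))"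

text \<open>m-Laplacian; the convention |0|^(m-2) * 0 = 0 is built in via 0 powr a = 0.\<close>
definition m_laplacian :: "('v \<Rightarrow> 'v \<Rightarrow> bool) \<Rightarrow> ('v \<Rightarrow> 'v \<Rightarrow> real) \<Rightarrow> real \<Rightarrow> ('v \<Rightarrow> real) \<Rightarrow> 'v \<Rightarrow> real" where
  "m_laplacian adj mu m u x =
     (1 / vmeasure adj mu x) *
     (\<Sum>y\<in>{y. adj x y}. mu x y * (\<bar>u y - u x\<bar> powr (m - 2) * (u y - u x)))"

definition grad_norm :: "('v \<Rightarrow> 'v \<Rightarrow> bool) \<Rightarrow> ('v \<Rightarrow> 'v \<Rightarrow> real) \<Rightarrow> ('v \<Rightarrow> real) \<Rightarrow> 'v \<Rightarrow> real" where
  "grad_norm adj mu u x =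
     sqrt (\<Sum>y\<in>{y. adj x y}. mu x y / (2 * vmeasure adj mu x) * (u y - u x)\<^sup>2)"

definition gdist :: "('v \<Rightarrow> 'v \<Rightarrow> bool) \<Rightarrow> 'v \<Rightarrow> 'v \<Rightarrow> nat" where
  "gdist adj x y = (LEAST n. (x, y) \<in> {(a, b). adj a b} ^^ n)"

definition W_o :: "('v \<Rightarrow> 'v \<Rightarrow> bool) \<Rightarrow> ('v \<Rightarrow> 'v \<Rightarrow> real) \<Rightarrow> 'v \<Rightarrow> nat \<Rightarrow> real" where
  "W_o adj mu v0 n =
     (\<Sum>(x, y)\<in>{(x, y). gdist adj v0 x \<le> n \<and> adj x y \<and> gdist adj v0 x < gdist adj v0 y}. mu x y)"

text \<open>Nontrivial positive solution of  Delta_m u + u^p |grad u|^q <= 0, with the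
  conventions 0^0 = 1, 0^q = 0 for q > 0, and failure where |grad u| = 0 if q < 0.\<close>
definition is_nontrivial_positive_solution ::
  "('v \<Rightarrow> 'v \<Rightarrow> bool) \<Rightarrow> ('v \<Rightarrow> 'v \<Rightarrow> real) \<Rightarrow> real \<Rightarrow> real \<Rightarrow> real \<Rightarrow> ('v \<Rightarrow> real) \<Rightarrow> bool" where
  "is_nontrivial_positive_solution adj mu m p q u \<longleftrightarrow>
     (\<forall>x. u x > 0) \<and> (\<exists>x y. u x \<noteq> u y) \<and>
     (\<forall>x. let g = grad_norm adj mu u x in
            (if g = 0 then
               (if q = 0 then m_laplacian adj mu m u x + u x powr p \<le> 0
                else if q > 0 then m_laplacian adj mu m u x \<le> 0
                else False)
             else m_laplacian adj mu m u x + u x powr p * g powr q \<le> 0))"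

end

theory Submission
  imports Defs
begin

lemma bern1:
  fixes x r :: real
  assumes "x > 0" "r \<ge> 1"
  shows "x powr r \<ge> 1 + r * (x - 1)"
proof -
  have "(\<lambda>x. x powr r) x - (\<lambda>x. x powr r) 1 \<ge> r * (x - 1)"
  proof (rule convex_on_imp_above_tangent[where A = "{0<..}"])
    show "convex_on {0<..} (\<lambda>x. x powr r)" using powr_convex assms by auto
    show "connected {0::real<..}" by simp
    show "(1::real) \<in> interior {0<..}" by (simp add: interior_open)
    show "x \<in> {0<..}" using assms by simp
    have "((\<lambda>z. z powr r) has_real_derivative r * 1 powr (r - 1)) (at 1)"
      by (rule has_real_derivative_powr) simp
    then show "((\<lambda>x. x powr r) has_field_derivative r) (at 1 within {0<..})"
      by (simp add: has_field_derivative_at_within)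
  qed
  then show ?thesis by simp
qed

lemma bern2:
  fixes \<rho> r :: real
  assumes "0 \<le> \<rho>" "\<rho> < 1" "r > 0"
  shows "(1 - \<rho>) powr (- r) \<ge> 1 + r * \<rho>"
proof -
  have "ln (1 - \<rho>) \<le> - \<rho>" using ln_le_minus_one[of "1-\<rho>"] assms by simp
  hence "r * \<rho> \<le> r * (- ln (1 - \<rho>))" using assms by (intro mult_left_mono) auto
  hence "r * \<rho> \<le> - r * ln (1 - \<rho>)" by simp
  moreover have "(1 - \<rho>) powr (- r) = exp (- r * ln (1 - \<rho>))" using assms by (simp add: powr_def)
  moreover have "1 + (- r * ln (1 - \<rho>)) \<le> exp (- r * ln (1 - \<rho>))" by (rule exp_ge_add_one_self)
  ultimately show ?thesis by linarith
qed

lemma mvt_pow: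
  fixes s t m :: real
  assumes "0 \<le> s" "s \<le> t" "m \<ge> 1"
  shows "t powr m - s powr m \<le> m * t powr (m - 1) * (t - s)"
proof (cases "s = 0")
  case True
  then show ?thesis using assms
    by (cases "t = 0") (auto simp: powr_diff field_simps)
next
  case False
  hence sp: "s > 0" using assms by simp
  hence tp: "t > 0" using assms by simp
  have "(s/t) powr m \<ge> 1 + m * (s/t - 1)" using bern1[of "s/t" m] sp tp assms by simp
  hence "s powr m / t powr m \<ge> 1 + m * (s/t - 1)" by (simp add: powr_divide)
  hence "s powr m \<ge> t powr m * (1 + m * (s/t - 1))" using tp by (simp add: field_simps)
  also have "t powr m * (1 + m * (s/t - 1)) = t powr m - m * (t powr m / t) * (t - s)"
    using tp by (simp add: field_simps)
  also have "t powr m / t = t powr (m - 1)" using tp by (simp add: powr_diff)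
  finally show ?thesis by simp
qed

definition Kc :: "real \<Rightarrow> real" where "Kc m = m * 2 powr (m - 1)"
definition Cc :: "real \<Rightarrow> real" where
  "Cc m = 2 powr m + Kc m * ((m - 1) / Kc m) powr (1 - m)"

lemma Cc_nonneg: "m > 1 \<Longrightarrow> Cc m \<ge> 0"
  unfolding Cc_def Kc_def by (intro add_nonneg_nonneg mult_nonneg_nonneg) auto

lemma core:
  fixes m \<rho> s t :: real
  assumes m: "m > 1" and r0: "0 \<le> \<rho>" and r1: "\<rho> < 1" and s0: "0 \<le> s" and t0: "0 \<le> t"
  shows "s powr m * (\<rho> / (1 - \<rho>)) powr (m - 1) - t powr m * \<rho> powr (m - 1)
           \<ge> - Cc m * \<bar>t - s\<bar> powr m"
proof -
  define P where "P = \<rho> powr (m - 1)"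
  define X where "X = (\<rho> / (1 - \<rho>)) powr (m - 1)"
  define K where "K = Kc m"
  define \<delta> where "\<delta> = (m - 1) / K"
  have Kpos: "K > 0" using m by (simp add: K_def Kc_def)
  have dpos: "\<delta> > 0" using m Kpos by (simp add: \<delta>_def)
  have P0: "P \<ge> 0" by (simp add: P_def)
  have P1: "P \<le> 1" unfolding P_def using r0 r1 m powr_mono2[of "m-1" \<rho> 1] by simp
  have Cc_eq: "Cc m = 2 powr m + K * \<delta> powr (1 - m)" by (simp add: Cc_def K_def \<delta>_def)
  have aux: "(1 - \<rho>) powr (- (m - 1)) = 1 / (1 - \<rho>) powr (m - 1)"
    by (rule powr_minus_divide)
  have X_eq: "X = P * (1 - \<rho>) powr (- (m - 1))"
    unfolding aux by (simp add: X_def P_def powr_divide)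
  have "(1 - \<rho>) powr (- (m - 1)) \<ge> 1 + (m - 1) * \<rho>" using bern2[of \<rho> "m-1"] r0 r1 m by simp
  hence "P * (1 - \<rho>) powr (- (m - 1)) \<ge> P * (1 + (m - 1) * \<rho>)" using P0
    by (rule mult_left_mono)
  hence XP: "X \<ge> P + (m - 1) * P * \<rho>" using X_eq by (simp add: algebra_simps)
  have Cnn: "2 powr m \<ge> 0" "K * \<delta> powr (1 - m) \<ge> 0" using Kpos
    by (simp, intro mult_nonneg_nonneg) simp_all
  show ?thesis
  proof (cases "t \<le> s")
    case True
    have "t powr m \<le> s powr m" using True t0 m by (intro powr_mono2) auto
    hence tP: "t powr m * P \<le> s powr m * P" using P0 by (rule mult_right_mono)
    have "(m - 1) * P * \<rho> \<ge> 0" using m r0 P0 by simp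
    hence "P \<le> X" using XP by linarith
    moreover have "s powr m * P \<le> s powr m * X" using \<open>P \<le> X\<close>
      by (intro mult_left_mono) auto
    moreover have "Cc m * \<bar>t - s\<bar> powr m \<ge> 0" using Cc_nonneg[OF m] by simp
    ultimately show ?thesis using tP unfolding X_def P_def by linarith
  next
    case False
    define d where "d = t - s"
    have dp: "d > 0" using False by (simp add: d_def)
    have absd: "\<bar>t - s\<bar> = d" using dp by (simp add: d_def)
    show ?thesis
    proof (cases "d \<ge> s")
      case True
      have "t \<le> 2 * d" using True by (simp add: d_def)
      hence "t powr m \<le> (2 * d) powr m" using t0 m by (intro powr_mono2) auto
      also have "\<dots> = 2 powr m * d powr m" using dp by (simp add: powr_mult)
      finally have tm: "t powr m \<le> 2 powr m * d powr m" .
      have "t powr m * P \<le> t powr m" using P1 by (simp add: mult_left_le)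
      moreover have "s powr m * X \<ge> 0" by (simp add: X_def)
      moreover have "K * \<delta> powr (1 - m) * d powr m \<ge> 0" using Cnn by simp
      ultimately have "s powr m * X - t powr m * P \<ge> - Cc m * d powr m"
        using tm by (simp add: Cc_eq algebra_simps)
      then show ?thesis by (simp add: X_def P_def absd)
    next
      case False
      hence sd: "d < s" by simp
      have sp: "s > 0" using sd dp by simp
      have t2: "t \<le> 2 * s" using sd by (simp add: d_def)
      have "t powr (m - 1) \<le> (2 * s) powr (m - 1)" using t0 t2 m by (intro powr_mono2) auto
      also have "\<dots> = 2 powr (m - 1) * s powr (m - 1)" using sp by (simp add: powr_mult)
      finally have tm1: "t powr (m - 1) \<le> 2 powr (m - 1) * s powr (m - 1)" .
      have "t powr m - s powr m \<le> m * t powr (m - 1) * (t - s)"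
        using mvt_pow[of s t m] s0 dp m by (simp add: d_def)
      also have "\<dots> \<le> m * (2 powr (m - 1) * s powr (m - 1)) * d"
        using tm1 m dp by (simp add: d_def)
      also have "\<dots> = K * s powr (m - 1) * d" by (simp add: K_def Kc_def)
      finally have diff: "t powr m - s powr m \<le> K * s powr (m - 1) * d" .
      have main: "s powr m * X - t powr m * P \<ge> P * ((m - 1) * s powr m * \<rho> - K * s powr (m - 1) * d)"
      proof -
        have "s powr m * X \<ge> s powr m * (P + (m - 1) * P * \<rho>)"
          using XP by (intro mult_left_mono) auto
        moreover have "t powr m * P \<le> (s powr m + K * s powr (m - 1) * d) * P"
          using diff P0 by (intro mult_right_mono) auto
        ultimately show ?thesis by (simp add: algebra_simps)
      qed
      have ssm: "s powr (m - 1) * s = s powr m" using sp by (simp add: powr_diff)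
      show ?thesis
      proof (cases "d \<le> \<delta> * s * \<rho>")
        case True
        have "K * s powr (m - 1) * d \<le> K * s powr (m - 1) * (\<delta> * s * \<rho>)"
          using True Kpos by (intro mult_left_mono) auto
        also have "\<dots> = (K * \<delta>) * (s powr (m - 1) * s) * \<rho>" by (simp add: algebra_simps)
        also have "\<dots> = (m - 1) * s powr m * \<rho>" using Kpos by (simp add: \<delta>_def ssm)
        finally have "P * ((m - 1) * s powr m * \<rho> - K * s powr (m - 1) * d) \<ge> 0"
          using P0 by simp
        moreover have "Cc m * \<bar>t - s\<bar> powr m \<ge> 0" using Cc_nonneg[OF m] by simp
        ultimately show ?thesis using main by (simp add: X_def P_def)
      next
        case False
        hence lt: "s * \<rho> < d / \<delta>" using dpos by (simp add: field_simps)
        have "P * s powr (m - 1) = (s * \<rho>) powr (m - 1)" using sp r0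
          by (simp add: P_def powr_mult)
        also have "\<dots> \<le> (d / \<delta>) powr (m - 1)" using lt sp r0 m by (intro powr_mono2) auto
        also have "\<dots> = d powr (m - 1) * \<delta> powr (1 - m)"
        proof -
          have "\<delta> powr (1 - m) = 1 / \<delta> powr (m - 1)" using powr_minus_divide[of \<delta> "m-1"] by simp
          then show ?thesis by (simp add: powr_divide)
        qed
        finally have ps: "P * s powr (m - 1) \<le> d powr (m - 1) * \<delta> powr (1 - m)" .
        have "P * ((m - 1) * s powr m * \<rho>) \<ge> 0" using P0 m sp r0 by simp
        hence "s powr m * X - t powr m * P \<ge> - (K * (P * s powr (m - 1)) * d)"
          using main by (simp add: algebra_simps)
        moreover have "K * (P * s powr (m - 1)) * d \<le> K * (d powr (m - 1) * \<delta> powr (1 - m)) * d"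
          using ps Kpos dp by (intro mult_right_mono mult_left_mono) auto
        moreover have "d powr (m - 1) * d = d powr m" using dp by (simp add: powr_diff)
        hence "K * (d powr (m - 1) * \<delta> powr (1 - m)) * d = K * \<delta> powr (1 - m) * d powr m"
          by (metis mult.commute mult.left_commute)
        moreover have "2 powr m * d powr m \<ge> 0" by simp
        moreover have "Cc m * d powr m = 2 powr m * d powr m + K * \<delta> powr (1 - m) * d powr m"
          by (simp add: Cc_eq algebra_simps)
        ultimately have "s powr m * X - t powr m * P \<ge> - Cc m * d powr m"
          by linarith
        then show ?thesis by (simp add: X_def P_def absd)
      qed
    qed
  qed
qed

lemma edge_le:
  fixes m a b s t :: real
  assumes m: "m > 1" and a: "a > 0" and ab: "a \<le> b" and s0: "0 \<le> s" and t0: "0 \<le> t"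
  shows "(s powr m * a powr (1 - m) - t powr m * b powr (1 - m)) * (\<bar>b - a\<bar> powr (m - 2) * (b - a))
           \<ge> - Cc m * \<bar>s - t\<bar> powr m"
proof (cases "a = b")
  case True
  have "Cc m * \<bar>s - t\<bar> powr m \<ge> 0" using Cc_nonneg[OF m] by simp
  then show ?thesis using True by simp
next
  case False
  hence ab': "a < b" using ab by simp
  have bp: "b > 0" using a ab by simp
  define \<rho> where "\<rho> = (b - a) / b"
  have r0: "0 \<le> \<rho>" using ab' bp by (simp add: \<rho>_def)
  have r1: "\<rho> < 1" using a bp by (simp add: \<rho>_def)
  have 1: "1 - \<rho> = a / b" using bp by (simp add: \<rho>_def field_simps)
  have 2: "\<rho> / (1 - \<rho>) = (b - a) / a" using bp a by (simp add: 1 \<rho>_def field_simps)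
  have psi: "\<bar>b - a\<bar> powr (m - 2) * (b - a) = (b - a) powr (m - 1)"
  proof -
    have "\<bar>b - a\<bar> = b - a" using ab' by simp
    moreover have "(b - a) powr (m - 2) * (b - a) = (b - a) powr (m - 1)"
    proof -
      have "(b - a) powr (m - 1) = (b - a) powr ((m - 2) + 1)" by simp
      also have "\<dots> = (b - a) powr (m - 2) * (b - a) powr 1" by (rule powr_add)
      also have "\<dots> = (b - a) powr (m - 2) * (b - a)" using ab' by simp
      finally show ?thesis by simp
    qed
    ultimately show ?thesis by simp
  qed
  have ea: "a powr (1 - m) * (b - a) powr (m - 1) = ((b - a) / a) powr (m - 1)"
  proof -
    have "a powr (1 - m) = 1 / a powr (m - 1)" using powr_minus_divide[of a "m-1"] by simp
    then show ?thesis by (simp add: powr_divide)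
  qed
  have eb: "b powr (1 - m) * (b - a) powr (m - 1) = \<rho> powr (m - 1)"
  proof -
    have "b powr (1 - m) = 1 / b powr (m - 1)" using powr_minus_divide[of b "m-1"] by simp
    then show ?thesis by (simp add: powr_divide \<rho>_def)
  qed
  have "(s powr m * a powr (1 - m) - t powr m * b powr (1 - m)) * (\<bar>b - a\<bar> powr (m - 2) * (b - a))
     = s powr m * (a powr (1 - m) * (b - a) powr (m - 1)) - t powr m * (b powr (1 - m) * (b - a) powr (m - 1))"
    unfolding psi by (simp add: algebra_simps)
  also have "\<dots> = s powr m * (\<rho> / (1 - \<rho>)) powr (m - 1) - t powr m * \<rho> powr (m - 1)"
    unfolding ea eb 2 ..
  also have "\<dots> \<ge> - Cc m * \<bar>t - s\<bar> powr m" by (rule core[OF m r0 r1 s0 t0])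
  finally show ?thesis by (simp add: abs_minus_commute)
qed

lemma edge:
  fixes m a b s t :: real
  assumes m: "m > 1" and a: "a > 0" and b: "b > 0" and s0: "0 \<le> s" and t0: "0 \<le> t"
  shows "(s powr m * a powr (1 - m) - t powr m * b powr (1 - m)) * (\<bar>b - a\<bar> powr (m - 2) * (b - a))
           \<ge> - Cc m * \<bar>s - t\<bar> powr m"
proof (cases "a \<le> b")
  case True
  then show ?thesis using edge_le[OF m a True s0 t0] by simp
next
  case False
  hence "b \<le> a" by simp
  from edge_le[OF m b this t0 s0]
  have "(t powr m * b powr (1 - m) - s powr m * a powr (1 - m)) * (\<bar>a - b\<bar> powr (m - 2) * (a - b))
           \<ge> - Cc m * \<bar>t - s\<bar> powr m" .
  moreover have "(t powr m * b powr (1 - m) - s powr m * a powr (1 - m)) * (\<bar>a - b\<bar> powr (m - 2) * (a - b))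
     = (s powr m * a powr (1 - m) - t powr m * b powr (1 - m)) * (\<bar>b - a\<bar> powr (m - 2) * (b - a))"
    by (simp add: abs_minus_commute algebra_simps)
  ultimately show ?thesis by (simp add: abs_minus_commute)
qed

lemma edge_pos:
  fixes m a b :: real
  assumes m: "m > 1" and a: "a > 0" and b: "b > 0" and ne: "a \<noteq> b"
  shows "(a powr (1 - m) - b powr (1 - m)) * (\<bar>b - a\<bar> powr (m - 2) * (b - a)) > 0"
proof (cases "a < b")
  case True
  have "b powr (1 - m) < a powr (1 - m)" using True a m by (intro powr_less_mono2_neg) auto
  moreover have "\<bar>b - a\<bar> powr (m - 2) > 0" using True by simp
  ultimately show ?thesis using True by (simp add: mult_pos_pos)
next
  case False
  hence ba: "b < a" using ne by simp
  have "a powr (1 - m) < b powr (1 - m)" using ba b m by (intro powr_less_mono2_neg) auto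
  moreover have "\<bar>b - a\<bar> powr (m - 2) * (b - a) < 0" using ba by (intro mult_pos_neg) auto
  ultimately show ?thesis by (intro mult_neg_neg) auto
qed

definition psi :: "real \<Rightarrow> real \<Rightarrow> real" where "psi m t = \<bar>t\<bar> powr (m - 2) * t"

lemma psi_odd: "psi m (- t) = - psi m t" by (simp add: psi_def)
lemma psi_swap: "psi m (a - b) = - psi m (b - a)"
  using psi_odd[of m "b - a"] by simp

context
  fixes adj :: "'v \<Rightarrow> 'v \<Rightarrow> bool" and mu :: "'v \<Rightarrow> 'v \<Rightarrow> real"
  assumes wg: "weighted_graph adj mu"
begin

lemma wg_fin: "finite {y. adj x y}" using wg unfolding weighted_graph_def by blast
lemma wg_sym: "adj x y \<longleftrightarrow> adj y x" using wg by (simp add: weighted_graph_def)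
lemma wg_musym: "mu x y = mu y x" using wg by (simp add: weighted_graph_def)
lemma wg_mu0: "mu x y \<ge> 0" using wg by (simp add: weighted_graph_def)
lemma wg_mupos: "adj x y \<Longrightarrow> mu x y > 0" using wg by (simp add: weighted_graph_def)
lemma wg_conn: "(x, y) \<in> {(a, b). adj a b}\<^sup>*" using wg by (simp add: weighted_graph_def)
lemma wg_inf: "infinite (UNIV :: 'v set)" using wg by (simp add: weighted_graph_def)

lemma nbr_ex: "\<exists>y. adj x y"
proof -
  obtain y :: 'v where "y \<noteq> x" using wg_inf
    by (metis UNIV_I finite.simps insertI1 insert_absorb subsetI finite_subset[of UNIV "{x}"])
  moreover have "(x, y) \<in> {(a, b). adj a b}\<^sup>*" by (rule wg_conn)
  ultimately show ?thesis by (metis (no_types, lifting) case_prodD converse_rtranclE mem_Collect_eq)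
qed

lemma vm_pos: "vmeasure adj mu x > 0"
proof -
  obtain y where y: "adj x y" using nbr_ex by blast
  have "vmeasure adj mu x \<ge> mu x y" unfolding vmeasure_def
    using y wg_fin wg_mu0 by (intro member_le_sum) auto
  then show ?thesis using wg_mupos[OF y] by simp
qed

lemma lap_nonpos:
  assumes "m_laplacian adj mu m u x \<le> 0"
  shows "(\<Sum>y\<in>{y. adj x y}. mu x y * psi m (u y - u x)) \<le> 0"
proof -
  have "(1 / vmeasure adj mu x) * (\<Sum>y\<in>{y. adj x y}. mu x y * psi m (u y - u x)) \<le> 0"
    using assms by (simp add: m_laplacian_def psi_def)
  then have "(\<Sum>y\<in>{y. adj x y}. mu x y * psi m (u y - u x)) / vmeasure adj mu x \<le> 0" by simp
  then show ?thesis using vm_pos[of x] by (simp add: divide_le_0_iff)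
qed

abbreviation "d v0 x \<equiv> gdist adj v0 x"

lemma gd_path: "(v0, x) \<in> {(a, b). adj a b} ^^ d v0 x"
proof -
  obtain n where "(v0, x) \<in> {(a, b). adj a b} ^^ n" using wg_conn rtrancl_power by blast
  then show ?thesis unfolding gdist_def by (rule LeastI)
qed

lemma gd_le: "(v0, x) \<in> {(a, b). adj a b} ^^ n \<Longrightarrow> d v0 x \<le> n"
  unfolding gdist_def by (rule Least_le)

lemma gd_adj: "adj x y \<Longrightarrow> d v0 y \<le> d v0 x + 1"
proof -
  assume a: "adj x y"
  have "(v0, y) \<in> {(a, b). adj a b} ^^ Suc (d v0 x)"
    using gd_path[of v0 x] a by (auto intro: relpow_Suc_I)
  then show ?thesis using gd_le by fastforce
qed

lemma gd_pred: "d v0 x = Suc k \<Longrightarrow> \<exists>z. adj z x \<and> d v0 z \<le> k"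
proof -
  assume a: "d v0 x = Suc k"
  have "(v0, x) \<in> {(a, b). adj a b} ^^ Suc k" using gd_path[of v0 x] a by simp
  then obtain z where "(v0, z) \<in> {(a, b). adj a b} ^^ k" "adj z x" by (auto elim: relpow_Suc_E)
  then show ?thesis using gd_le by blast
qed

lemma ball_fin: "finite {x. d v0 x \<le> n}"
proof (induction n)
  case 0
  have "{x. d v0 x \<le> 0} \<subseteq> {v0}"
  proof
    fix x assume "x \<in> {x. d v0 x \<le> 0}"
    then have "(v0, x) \<in> {(a, b). adj a b} ^^ 0" using gd_path[of v0 x] by simp
    then show "x \<in> {v0}" by simp
  qed
  then show ?case using finite_subset by blast
next
  case (Suc n)
  have "{x. d v0 x \<le> Suc n} \<subseteq> {x. d v0 x \<le> n} \<union> (\<Union>z\<in>{x. d v0 x \<le> n}. {y. adj z y})"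
  proof
    fix x assume "x \<in> {x. d v0 x \<le> Suc n}"
    then have "d v0 x \<le> n \<or> d v0 x = Suc n" by auto
    then show "x \<in> {x. d v0 x \<le> n} \<union> (\<Union>z\<in>{x. d v0 x \<le> n}. {y. adj z y})"
      using gd_pred[of v0 x n] by auto
  qed
  moreover have "finite ({x. d v0 x \<le> n} \<union> (\<Union>z\<in>{x. d v0 x \<le> n}. {y. adj z y}))"
    using Suc wg_fin by auto
  ultimately show ?case using finite_subset by blast
qed

lemma main_sum:
  fixes u phi :: "'v \<Rightarrow> real" and m :: real and N :: nat
  assumes Sneg: "\<And>x. (\<Sum>y\<in>{y. adj x y}. mu x y * psi m (u y - u x)) \<le> 0"
    and phi0: "\<And>x. phi x \<ge> 0" and phiN: "\<And>x. d v0 x \<ge> N \<Longrightarrow> phi x = 0"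
  shows "(\<Sum>(x, y)\<in>{(x, y). d v0 x \<le> N \<and> d v0 y \<le> N \<and> adj x y}.
            mu x y * ((phi x - phi y) * psi m (u y - u x))) \<le> 0"
proof -
  define B where "B = {x. d v0 x \<le> N}"
  define Q where "Q = {(x, y). d v0 x \<le> N \<and> d v0 y \<le> N \<and> adj x y}"
  define g where "g = (\<lambda>(x, y). phi x * (mu x y * psi m (u y - u x)))"
  have finB: "finite B" unfolding B_def by (rule ball_fin)
  have QS: "Q \<subseteq> Sigma B (\<lambda>x. {y. adj x y})" by (auto simp: Q_def B_def)
  have finS: "finite (Sigma B (\<lambda>x. {y. adj x y}))" using finB wg_fin by auto
  have finQ: "finite Q" using QS finS finite_subset by blast
  have T: "(\<Sum>x\<in>B. phi x * (\<Sum>y\<in>{y. adj x y}. mu x y * psi m (u y - u x))) \<le> 0"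
    using phi0 Sneg by (meson mult_nonneg_nonpos sum_nonpos)
  have "(\<Sum>x\<in>B. phi x * (\<Sum>y\<in>{y. adj x y}. mu x y * psi m (u y - u x)))
      = (\<Sum>x\<in>B. \<Sum>y\<in>{y. adj x y}. g (x, y))" by (simp add: g_def sum_distrib_left)
  also have "\<dots> = (\<Sum>p\<in>Sigma B (\<lambda>x. {y. adj x y}). g p)"
    using finB wg_fin by (subst sum.Sigma) auto
  also have "\<dots> = (\<Sum>p\<in>Q. g p)"
  proof (rule sum.mono_neutral_right[OF finS QS])
    show "\<forall>i\<in>Sigma B (\<lambda>x. {y. adj x y}) - Q. g i = 0"
    proof
      fix p assume p: "p \<in> Sigma B (\<lambda>x. {y. adj x y}) - Q"
      obtain x y where xy: "p = (x, y)" by (cases p)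
      have "adj x y" "d v0 x \<le> N" "\<not> d v0 y \<le> N" using p xy by (auto simp: B_def Q_def)
      moreover have "d v0 y \<le> d v0 x + 1" using gd_adj \<open>adj x y\<close> by blast
      ultimately have "phi x = 0" using phiN by simp
      then show "g p = 0" by (simp add: xy g_def)
    qed
  qed
  finally have T2: "(\<Sum>p\<in>Q. g p) \<le> 0" using T by simp
  have symQ: "\<And>x y. (x, y) \<in> Q \<longleftrightarrow> (y, x) \<in> Q" using wg_sym by (auto simp: Q_def)
  have "(\<Sum>(x, y)\<in>Q. phi y * (mu x y * psi m (u y - u x)))
      = (\<Sum>(x, y)\<in>Q. phi x * (mu y x * psi m (u x - u y)))"
    by (rule sum.reindex_bij_witness[where i = prod.swap and j = prod.swap]) (auto simp: symQ)
  also have "\<dots> = - (\<Sum>p\<in>Q. g p)"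
  proof -
    have "(\<Sum>(x, y)\<in>Q. phi x * (mu y x * psi m (u x - u y))) = (\<Sum>p\<in>Q. - g p)"
    proof (rule sum.cong[OF refl])
      fix p assume "p \<in> Q"
      obtain x y where xy: "p = (x, y)" by (cases p)
      have "mu y x = mu x y" by (rule wg_musym)
      moreover have "psi m (u x - u y) = - psi m (u y - u x)" by (rule psi_swap)
      ultimately show "(\<lambda>(x, y). phi x * (mu y x * psi m (u x - u y))) p = - g p"
        by (simp add: xy g_def)
    qed
    also have "\<dots> = - (\<Sum>p\<in>Q. g p)" by (rule sum_negf)
    finally show ?thesis .
  qed
  finally have sw: "(\<Sum>(x, y)\<in>Q. phi y * (mu x y * psi m (u y - u x))) = - (\<Sum>p\<in>Q. g p)" .
  have "(\<Sum>(x, y)\<in>Q. mu x y * ((phi x - phi y) * psi m (u y - u x)))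
      = (\<Sum>p\<in>Q. g p) - (\<Sum>(x, y)\<in>Q. phi y * (mu x y * psi m (u y - u x)))"
    by (simp add: g_def case_prod_beta algebra_simps sum_subtractf[symmetric])
  also have "\<dots> = 2 * (\<Sum>p\<in>Q. g p)" using sw by simp
  finally show ?thesis using T2 by (simp add: Q_def)
qed

lemma key:
  fixes u eta :: "'v \<Rightarrow> real" and m :: real and N :: nat
  assumes m: "m > 1" and upos: "\<And>x. u x > 0"
    and Sneg: "\<And>x. (\<Sum>y\<in>{y. adj x y}. mu x y * psi m (u y - u x)) \<le> 0"
    and eta0: "\<And>x. eta x \<ge> 0" and etaN: "\<And>x. d v0 x \<ge> N \<Longrightarrow> eta x = 0"
    and e: "adj x0 y0" and ex: "eta x0 = 1" and ey: "eta y0 = 1"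
    and dx: "d v0 x0 \<le> N" and dy: "d v0 y0 \<le> N"
  shows "mu x0 y0 * ((u x0 powr (1 - m) - u y0 powr (1 - m)) * psi m (u y0 - u x0))
          \<le> Cc m * (\<Sum>(x, y)\<in>{(x, y). d v0 x \<le> N \<and> d v0 y \<le> N \<and> adj x y}.
                         mu x y * \<bar>eta x - eta y\<bar> powr m)"
proof -
  define Q where "Q = {(x, y). d v0 x \<le> N \<and> d v0 y \<le> N \<and> adj x y}"
  define phi where "phi = (\<lambda>x. eta x powr m * u x powr (1 - m))"
  define F where "F = (\<lambda>(x, y). mu x y * ((phi x - phi y) * psi m (u y - u x)))"
  define G where "G = (\<lambda>(x, y). mu x y * \<bar>eta x - eta y\<bar> powr m)"
  have finQ: "finite Q"
  proof -
    have "Q \<subseteq> {x. d v0 x \<le> N} \<times> {x. d v0 x \<le> N}" by (auto simp: Q_def)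
    then show ?thesis using ball_fin finite_subset by blast
  qed
  have "(\<Sum>p\<in>Q. F p) \<le> 0" unfolding F_def Q_def
    by (rule main_sum[OF Sneg]) (auto simp: phi_def etaN)
  have hnn: "F p + Cc m * G p \<ge> 0" for p
  proof -
    obtain x y where xy: "p = (x, y)" by (cases p)
    have "(eta x powr m * u x powr (1 - m) - eta y powr m * u y powr (1 - m)) *
            (\<bar>u y - u x\<bar> powr (m - 2) * (u y - u x)) \<ge> - Cc m * \<bar>eta x - eta y\<bar> powr m"
      by (rule edge[OF m upos upos eta0 eta0])
    hence "mu x y * (- Cc m * \<bar>eta x - eta y\<bar> powr m) \<le> mu x y * ((eta x powr m * u x powr (1 - m) - eta y powr m * u y powr (1 - m)) *
            (\<bar>u y - u x\<bar> powr (m - 2) * (u y - u x)))"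
      using wg_mu0[of x y] by (rule mult_left_mono)
    hence "mu x y * ((phi x - phi y) * psi m (u y - u x)) \<ge> mu x y * (- Cc m * \<bar>eta x - eta y\<bar> powr m)"
      by (simp add: phi_def psi_def)
    then show ?thesis by (simp add: xy F_def G_def algebra_simps)
  qed
  have inQ: "(x0, y0) \<in> Q" using e dx dy by (simp add: Q_def)
  have "F (x0, y0) + Cc m * G (x0, y0) \<le> (\<Sum>p\<in>Q. F p + Cc m * G p)"
    by (rule member_le_sum[OF inQ]) (use hnn finQ in auto)
  also have "\<dots> = (\<Sum>p\<in>Q. F p) + Cc m * (\<Sum>p\<in>Q. G p)"
    by (simp add: sum.distrib sum_distrib_left)
  finally have "F (x0, y0) \<le> Cc m * (\<Sum>p\<in>Q. G p)"
    using \<open>(\<Sum>p\<in>Q. F p) \<le> 0\<close> by (simp add: G_def ex ey)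
  then show ?thesis by (simp add: F_def G_def phi_def ex ey Q_def)
qed

lemma W_fin: "finite {(x, y). d v0 x \<le> n \<and> adj x y \<and> d v0 x < d v0 y}"
proof -
  have "{(x, y). d v0 x \<le> n \<and> adj x y \<and> d v0 x < d v0 y} \<subseteq> Sigma {x. d v0 x \<le> n} (\<lambda>x. {y. adj x y})"
    by auto
  moreover have "finite (Sigma {x. d v0 x \<le> n} (\<lambda>x. {y. adj x y}))" using ball_fin wg_fin by auto
  ultimately show ?thesis using finite_subset by blast
qed

lemma energy:
  fixes f :: "nat \<Rightarrow> real" and gam :: "nat \<Rightarrow> real" and J :: "nat set" and nv :: "nat \<Rightarrow> nat"
    and m :: real and N :: nat
  assumes m: "m > 0" and finJ: "finite J" and gam0: "\<And>j. gam j \<ge> 0"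
    and fb: "\<And>k. \<bar>f k - f (Suc k)\<bar> powr m \<le> (\<Sum>j\<in>J. if k \<le> nv j then gam j else 0)"
  shows "(\<Sum>(x, y)\<in>{(x, y). d v0 x \<le> N \<and> d v0 y \<le> N \<and> adj x y}.
            mu x y * \<bar>f (d v0 x) - f (d v0 y)\<bar> powr m)
         \<le> 2 * (\<Sum>j\<in>J. gam j * W_o adj mu v0 (nv j))"
proof -
  define Q where "Q = {(x, y). d v0 x \<le> N \<and> d v0 y \<le> N \<and> adj x y}"
  define A where "A = (\<lambda>(x, y). \<Sum>j\<in>J. if d v0 x < d v0 y \<and> d v0 x \<le> nv j then gam j else 0)"
  have finQ: "finite Q"
  proof -
    have "Q \<subseteq> {x. d v0 x \<le> N} \<times> {x. d v0 x \<le> N}" by (auto simp: Q_def)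
    then show ?thesis using ball_fin finite_subset by blast
  qed
  have symQ: "\<And>x y. (x, y) \<in> Q \<longleftrightarrow> (y, x) \<in> Q" using wg_sym by (auto simp: Q_def)
  have A0: "A p \<ge> 0" for p unfolding A_def using gam0 by (cases p) (auto intro: sum_nonneg)
  have pt: "mu x y * \<bar>f (d v0 x) - f (d v0 y)\<bar> powr m \<le> mu x y * (A (x, y) + A (y, x))"
    if "(x, y) \<in> Q" for x y
  proof -
    have a: "adj x y" using that by (simp add: Q_def)
    have "d v0 y \<le> d v0 x + 1" using gd_adj a by blast
    moreover have "d v0 x \<le> d v0 y + 1" using gd_adj a wg_sym by blast
    ultimately consider "d v0 x = d v0 y" | "d v0 y = Suc (d v0 x)" | "d v0 x = Suc (d v0 y)" by linarith
    then have "\<bar>f (d v0 x) - f (d v0 y)\<bar> powr m \<le> A (x, y) + A (y, x)"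
    proof cases
      case 1
      then show ?thesis using A0[of "(x,y)"] A0[of "(y,x)"] m by simp
    next
      case 2
      have "A (x, y) = (\<Sum>j\<in>J. if d v0 x \<le> nv j then gam j else 0)" using 2 by (simp add: A_def)
      then show ?thesis using fb[of "d v0 x"] 2 A0[of "(y,x)"] by simp
    next
      case 3
      have "A (y, x) = (\<Sum>j\<in>J. if d v0 y \<le> nv j then gam j else 0)" using 3 by (simp add: A_def)
      moreover have "\<bar>f (d v0 x) - f (d v0 y)\<bar> = \<bar>f (d v0 y) - f (Suc (d v0 y))\<bar>"
        using 3 by simp
      ultimately show ?thesis using fb[of "d v0 y"] A0[of "(x,y)"] by simp
    qed
    then show ?thesis using wg_mu0[of x y] by (rule mult_left_mono)
  qed
  have "(\<Sum>(x, y)\<in>Q. mu x y * \<bar>f (d v0 x) - f (d v0 y)\<bar> powr m)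
      \<le> (\<Sum>(x, y)\<in>Q. mu x y * (A (x, y) + A (y, x)))"
    by (rule sum_mono) (use pt in auto)
  also have "\<dots> = (\<Sum>(x, y)\<in>Q. mu x y * A (x, y)) + (\<Sum>(x, y)\<in>Q. mu x y * A (y, x))"
    by (simp add: sum.distrib[symmetric] case_prod_beta algebra_simps)
  also have "(\<Sum>(x, y)\<in>Q. mu x y * A (y, x)) = (\<Sum>(x, y)\<in>Q. mu y x * A (x, y))"
    by (rule sum.reindex_bij_witness[where i = prod.swap and j = prod.swap]) (auto simp: symQ)
  also have "\<dots> = (\<Sum>(x, y)\<in>Q. mu x y * A (x, y))"
    by (rule sum.cong[OF refl]) (auto simp: wg_musym)
  finally have st1: "(\<Sum>(x, y)\<in>Q. mu x y * \<bar>f (d v0 x) - f (d v0 y)\<bar> powr m)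
      \<le> 2 * (\<Sum>(x, y)\<in>Q. mu x y * A (x, y))" by simp
  have "(\<Sum>(x, y)\<in>Q. mu x y * A (x, y))
      = (\<Sum>(x, y)\<in>Q. \<Sum>j\<in>J. gam j * (if d v0 x < d v0 y \<and> d v0 x \<le> nv j then mu x y else 0))"
    by (rule sum.cong[OF refl]) (auto simp: A_def sum_distrib_left intro!: sum.cong)
  also have "\<dots> = (\<Sum>j\<in>J. gam j * (\<Sum>(x, y)\<in>Q. if d v0 x < d v0 y \<and> d v0 x \<le> nv j then mu x y else 0))"
    unfolding sum_distrib_left split_def by (rule sum.swap)
  also have "\<dots> \<le> (\<Sum>j\<in>J. gam j * W_o adj mu v0 (nv j))"
  proof (rule sum_mono)
    fix j assume "j \<in> J"
    define Wj where "Wj = {(x, y). d v0 x \<le> nv j \<and> adj x y \<and> d v0 x < d v0 y}"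
    have "(\<Sum>(x, y)\<in>Q. if d v0 x < d v0 y \<and> d v0 x \<le> nv j then mu x y else 0)
        = (\<Sum>p\<in>Q. if (\<lambda>(x, y). d v0 x < d v0 y \<and> d v0 x \<le> nv j) p then (\<lambda>(x, y). mu x y) p else 0)"
      by (rule sum.cong[OF refl]) (auto split: prod.splits)
    also have "\<dots> = (\<Sum>p\<in>{p\<in>Q. (\<lambda>(x, y). d v0 x < d v0 y \<and> d v0 x \<le> nv j) p}. (\<lambda>(x, y). mu x y) p)"
      by (rule sum.inter_filter[OF finQ, symmetric])
    also have "\<dots> \<le> (\<Sum>p\<in>Wj. (\<lambda>(x, y). mu x y) p)"
    proof (rule sum_mono2)
      show "finite Wj" unfolding Wj_def by (rule W_fin)
      show "{p\<in>Q. (\<lambda>(x, y). d v0 x < d v0 y \<and> d v0 x \<le> nv j) p} \<subseteq> Wj"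
        by (auto simp: Wj_def Q_def)
      show "\<And>b. b \<in> Wj - {p\<in>Q. (\<lambda>(x, y). d v0 x < d v0 y \<and> d v0 x \<le> nv j) p} \<Longrightarrow> 0 \<le> (\<lambda>(x, y). mu x y) b"
        using wg_mu0 by auto
    qed
    also have "\<dots> = W_o adj mu v0 (nv j)" by (simp add: W_o_def Wj_def)
    finally show "gam j * (\<Sum>(x, y)\<in>Q. if d v0 x < d v0 y \<and> d v0 x \<le> nv j then mu x y else 0)
        \<le> gam j * W_o adj mu v0 (nv j)" using gam0 by (rule mult_left_mono)
  qed
  finally show ?thesis using st1 by (simp add: Q_def)
qed

end

definition Hs :: "nat \<Rightarrow> nat \<Rightarrow> real" where "Hs J0 J1 = (\<Sum>j\<in>{J0..<J1}. 1 / real (j + 1))"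
definition bet :: "nat \<Rightarrow> nat \<Rightarrow> nat \<Rightarrow> real" where "bet J0 J1 j = 1 / (real (j + 1) * Hs J0 J1)"
definition ramp :: "nat \<Rightarrow> nat \<Rightarrow> real" where
  "ramp j k = min 1 (max 0 ((2 ^ (j + 1) - real k) / 2 ^ j))"
definition fc :: "nat \<Rightarrow> nat \<Rightarrow> nat \<Rightarrow> real" where
  "fc J0 J1 k = (\<Sum>j\<in>{J0..<J1}. bet J0 J1 j * ramp j k)"

lemma ramp_bounds: "0 \<le> ramp j k" "ramp j k \<le> 1" by (auto simp: ramp_def)

lemma ramp_one:
  assumes "k \<le> 2 ^ j" shows "ramp j k = 1"
proof -
  have rk: "real k \<le> 2 ^ j" using assms by (metis of_nat_le_iff of_nat_numeral of_nat_power)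
  have p: "(2::real) ^ j > 0" by simp
  have "2 * 2 ^ j - real k \<ge> 2 ^ j" using rk by linarith
  define X where "X = (2 * 2 ^ j - real k) / 2 ^ j"
  have "X \<ge> 1" unfolding X_def using p \<open>2 * 2 ^ j - real k \<ge> 2 ^ j\<close> by (simp add: le_divide_eq)
  moreover have "ramp j k = min 1 (max 0 X)" by (simp add: ramp_def X_def)
  ultimately show ?thesis by (simp add: min_def max_def)
qed

lemma ramp_zero:
  assumes "2 ^ (j + 1) \<le> k" shows "ramp j k = 0"
proof -
  have rk: "2 * 2 ^ j \<le> real k" using assms by (metis of_nat_le_iff of_nat_numeral of_nat_power power_Suc Suc_eq_plus1)
  have p: "(2::real) ^ j > 0" by simp
  define X where "X = (2 * 2 ^ j - real k) / 2 ^ j"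
  have "X \<le> 0" unfolding X_def using rk p by (simp add: divide_le_0_iff)
  moreover have "ramp j k = min 1 (max 0 X)" by (simp add: ramp_def X_def)
  ultimately show ?thesis by (simp add: min_def max_def)
qed

lemma ramp_diff: "ramp j k - ramp j (Suc k) =
   (if 2 ^ j \<le> k \<and> k < 2 ^ (j + 1) then 1 / 2 ^ j else 0)"
proof (cases "k + 1 \<le> 2 ^ j")
  case True
  then show ?thesis using ramp_one[of k j] ramp_one[of "Suc k" j] by auto
next
  case F1: False
  show ?thesis
  proof (cases "2 ^ (j + 1) \<le> k")
    case True
    have "2 ^ (j + 1) \<le> Suc k" using True by simp
    then show ?thesis using True ramp_zero[of j k] ramp_zero[of j "Suc k"] by auto
  next
    case False
    have kint: "2 ^ j \<le> k" using F1 by simp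
    have kup: "k < 2 ^ (j + 1)" using False by simp
    have rkint: "2 ^ j \<le> real k" using kint by simp
    have rk1: "real k + 1 \<le> 2 * 2 ^ j"
    proof -
      have "k + 1 \<le> 2 * 2 ^ j" using kup by simp
      then have "real (k + 1) \<le> real (2 * 2 ^ j)" by (simp only: of_nat_le_iff)
      then show ?thesis by simp
    qed
    have p: "(2::real) ^ j > 0" by simp
    have "2 * 2 ^ j - real k \<le> 2 ^ j" using rkint by linarith
    hence a1: "(2 * 2 ^ j - real k) / 2 ^ j \<le> 1" using p by (simp add: divide_le_eq)
    have a2: "(2 * 2 ^ j - real k) / 2 ^ j \<ge> 0" using rk1 p by simp
    have "2 * 2 ^ j - (real k + 1) \<le> 2 ^ j" using rkint by linarith
    hence b1: "(2 * 2 ^ j - (real k + 1)) / 2 ^ j \<le> 1" using p by (simp add: divide_le_eq)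
    have b2: "(2 * 2 ^ j - (real k + 1)) / 2 ^ j \<ge> 0" using rk1 p by simp
    have r1: "ramp j k = (2 * 2 ^ j - real k) / 2 ^ j"
    proof -
      define X where "X = (2 * 2 ^ j - real k) / 2 ^ j"
      have "ramp j k = min 1 (max 0 X)" by (simp add: ramp_def X_def)
      then show ?thesis using a1 a2 by (simp add: X_def[symmetric] min_def max_def)
    qed
    have r2: "ramp j (Suc k) = (2 * 2 ^ j - (real k + 1)) / 2 ^ j"
    proof -
      define X where "X = (2 * 2 ^ j - (real k + 1)) / 2 ^ j"
      have "ramp j (Suc k) = min 1 (max 0 X)" by (simp add: ramp_def X_def algebra_simps)
      then show ?thesis using b1 b2 by (simp add: X_def[symmetric] min_def max_def)
    qed
    have "ramp j k - ramp j (Suc k) = 1 / 2 ^ j" unfolding r1 r2 using p by (simp add: diff_divide_distrib[symmetric])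
    then show ?thesis using kint kup by simp
  qed
qed

lemma C_unique:
  assumes "2 ^ i \<le> (x::nat)" "x < 2 ^ (i + 1)" "2 ^ j \<le> x" "x < 2 ^ (j + 1)"
  shows "i = j"
proof (rule ccontr)
  assume "i \<noteq> j"
  then consider "i + 1 \<le> j" | "j + 1 \<le> i" by linarith
  then show False
  proof cases
    case 1
    have "(2::nat) ^ (i + 1) \<le> 2 ^ j" using 1 by (rule power_increasing) simp
    then show False using assms by simp
  next
    case 2
    have "(2::nat) ^ (j + 1) \<le> 2 ^ i" using 2 by (rule power_increasing) simp
    then show False using assms by simp
  qed
qed

lemma Hs_pos_bet_sum:
  assumes "Hs J0 J1 > 0"
  shows "(\<Sum>j\<in>{J0..<J1}. bet J0 J1 j) = 1"
proof -
  have "(\<Sum>j\<in>{J0..<J1}. bet J0 J1 j) = (\<Sum>j\<in>{J0..<J1}. 1 / real (j + 1)) / Hs J0 J1"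
    by (simp add: bet_def sum_divide_distrib)
  then show ?thesis using assms by (simp add: Hs_def)
qed

lemma bet_nonneg: "Hs J0 J1 > 0 \<Longrightarrow> bet J0 J1 j \<ge> 0" by (simp add: bet_def)

lemma fc_bounds:
  assumes "Hs J0 J1 > 0"
  shows "0 \<le> fc J0 J1 k" "fc J0 J1 k \<le> 1"
proof -
  show "0 \<le> fc J0 J1 k" unfolding fc_def
    using bet_nonneg[OF assms] ramp_bounds by (intro sum_nonneg mult_nonneg_nonneg) auto
  have "fc J0 J1 k \<le> (\<Sum>j\<in>{J0..<J1}. bet J0 J1 j * 1)" unfolding fc_def
    using bet_nonneg[OF assms] ramp_bounds by (intro sum_mono mult_left_mono) auto
  then show "fc J0 J1 k \<le> 1" using Hs_pos_bet_sum[OF assms] by simp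
qed

lemma fc_one:
  assumes "Hs J0 J1 > 0" "k \<le> 2 ^ J0"
  shows "fc J0 J1 k = 1"
proof -
  have "fc J0 J1 k = (\<Sum>j\<in>{J0..<J1}. bet J0 J1 j)" unfolding fc_def
  proof (rule sum.cong[OF refl])
    fix j assume "j \<in> {J0..<J1}"
    then have "(2::nat) ^ J0 \<le> 2 ^ j" by (intro power_increasing) auto
    then have "k \<le> 2 ^ j" using assms(2) by linarith
    then have "ramp j k = 1" by (rule ramp_one)
    then show "bet J0 J1 j * ramp j k = bet J0 J1 j" by simp
  qed
  then show ?thesis using Hs_pos_bet_sum[OF assms(1)] by simp
qed

lemma fc_zero:
  assumes "2 ^ J1 \<le> k"
  shows "fc J0 J1 k = 0"
  unfolding fc_def
proof (rule sum.neutral, rule ballI)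
  fix j assume "j \<in> {J0..<J1}"
  then have "(2::nat) ^ (j + 1) \<le> 2 ^ J1" by (intro power_increasing) auto
  then have "(2::nat) ^ (j + 1) \<le> k" using assms by simp
  then show "bet J0 J1 j * ramp j k = 0" using ramp_zero by simp
qed

lemma fc_diff_bound:
  fixes m :: real
  assumes H: "Hs J0 J1 > 0" and m: "m > 0"
  shows "\<bar>fc J0 J1 k - fc J0 J1 (Suc k)\<bar> powr m
     \<le> (\<Sum>j\<in>{J0..<J1}. if k \<le> 2 ^ (j + 1) then (bet J0 J1 j / 2 ^ j) powr m else 0)"
proof -
  let ?C = "\<lambda>j. 2 ^ j \<le> k \<and> k < (2::nat) ^ (j + 1)"
  have eq: "fc J0 J1 k - fc J0 J1 (Suc k) = (\<Sum>j\<in>{J0..<J1}. if ?C j then bet J0 J1 j / 2 ^ j else 0)"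
    unfolding fc_def sum_subtractf[symmetric]
  proof (rule sum.cong[OF refl])
    fix j assume "j \<in> {J0..<J1}"
    have "bet J0 J1 j * ramp j k - bet J0 J1 j * ramp j (Suc k) = bet J0 J1 j * (ramp j k - ramp j (Suc k))"
      by (rule right_diff_distrib[symmetric])
    then show "bet J0 J1 j * ramp j k - bet J0 J1 j * ramp j (Suc k) = (if ?C j then bet J0 J1 j / 2 ^ j else 0)"
      by (simp only: ramp_diff) simp
  qed
  have nn: "0 \<le> (\<Sum>j\<in>{J0..<J1}. if k \<le> 2 ^ (j + 1) then (bet J0 J1 j / 2 ^ j) powr m else 0)"
    by (intro sum_nonneg) auto
  show ?thesis
  proof (cases "\<exists>j\<in>{J0..<J1}. ?C j")
    case True
    then obtain j1 where j1: "j1 \<in> {J0..<J1}" "?C j1" by blast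
    have "(\<Sum>j\<in>{J0..<J1}. if ?C j then bet J0 J1 j / 2 ^ j else 0) = bet J0 J1 j1 / 2 ^ j1"
    proof -
      have "(\<Sum>j\<in>{J0..<J1}. if ?C j then bet J0 J1 j / 2 ^ j else 0)
          = (\<Sum>j\<in>{J0..<J1}. if j = j1 then bet J0 J1 j / 2 ^ j else 0)"
        by (rule sum.cong[OF refl]) (use j1 C_unique[of j1 k] in auto)
      also have "\<dots> = bet J0 J1 j1 / 2 ^ j1" using j1 by simp
      finally show ?thesis .
    qed
    hence "\<bar>fc J0 J1 k - fc J0 J1 (Suc k)\<bar> powr m = (bet J0 J1 j1 / 2 ^ j1) powr m"
      using eq bet_nonneg[OF H, of j1] by simp
    also have "\<dots> = (if k \<le> 2 ^ (j1 + 1) then (bet J0 J1 j1 / 2 ^ j1) powr m else 0)"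
    proof -
      have "k < 2 ^ (j1 + 1)" using j1(2) by simp
      then show ?thesis by simp
    qed
    also have "\<dots> \<le> (\<Sum>j\<in>{J0..<J1}. if k \<le> 2 ^ (j + 1) then (bet J0 J1 j / 2 ^ j) powr m else 0)"
      by (rule member_le_sum[OF j1(1)]) auto
    finally show ?thesis .
  next
    case False
    hence "fc J0 J1 k - fc J0 J1 (Suc k) = 0" using eq by (intro trans[OF eq] sum.neutral) auto
    then show ?thesis using nn by simp
  qed
qed

lemma term_bound:
  fixes m Cw H w a :: real and j :: nat
  assumes m: "m > 1" and Cw: "Cw > 0" and H: "H > 0" and a: "a = real (j + 1)"
    and w: "w \<le> Cw * real ((2::nat) ^ (j + 1)) powr m * ln (real ((2::nat) ^ (j + 1))) powr (m - 1)"
  shows "((1 / (a * H)) / 2 ^ j) powr m * w \<le> Cw * 2 powr m * H powr (- m) * (1 / a)"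
proof -
  have ap: "a > 0" using a by simp
  define b where "b = 1 / (a * H)"
  have bp: "b > 0" using ap H by (simp add: b_def)
  have r2: "real ((2::nat) ^ (j + 1)) = 2 * 2 ^ j" by simp
  have ln2: "ln (real ((2::nat) ^ (j + 1))) = a * ln 2"
    unfolding a by (simp only: of_nat_power ln_realpow) simp
  have lnle: "ln (real ((2::nat) ^ (j + 1))) powr (m - 1) \<le> a powr (m - 1)"
  proof -
    have "a * ln 2 \<le> a" using ap ln_2_less_1 by (simp add: mult_left_le)
    moreover have "0 \<le> a * ln 2" using ap by simp
    ultimately show ?thesis unfolding ln2 using m by (intro powr_mono2) auto
  qed
  have c0: "(b / 2 ^ j) powr m \<ge> 0" by simp
  have "(b / 2 ^ j) powr m * w \<le> (b / 2 ^ j) powr m * (Cw * real ((2::nat) ^ (j + 1)) powr m * ln (real ((2::nat) ^ (j + 1))) powr (m - 1))"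
    using w c0 by (rule mult_left_mono)
  also have "\<dots> = Cw * ((b / 2 ^ j) powr m * (2 * 2 ^ j) powr m) * ln (real ((2::nat) ^ (j + 1))) powr (m - 1)"
    unfolding r2 by (simp add: algebra_simps)
  also have "(b / 2 ^ j) powr m * (2 * 2 ^ j) powr m = (2 * b) powr m"
  proof -
    have "(b / 2 ^ j) powr m * (2 * 2 ^ j) powr m = ((b / 2 ^ j) * (2 * 2 ^ j)) powr m"
      by (rule powr_mult[symmetric])
    also have "(b / 2 ^ j) * (2 * 2 ^ j) = 2 * b" by simp
    finally show ?thesis .
  qed
  also have "\<dots> = 2 powr m * b powr m" using bp by (simp add: powr_mult)
  also have "Cw * (2 powr m * b powr m) * ln (real ((2::nat) ^ (j + 1))) powr (m - 1)
      \<le> Cw * (2 powr m * b powr m) * a powr (m - 1)"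
    using lnle Cw by (intro mult_left_mono) auto
  also have "b powr m * a powr (m - 1) = H powr (- m) * (1 / a)"
  proof -
    have e1: "b powr m = 1 / (a powr m * H powr m)" using ap H by (simp add: b_def powr_divide powr_mult)
    have e2: "a powr (m - 1) = a powr m / a" using ap by (simp add: powr_diff)
    have e3: "H powr (- m) = 1 / H powr m" by (simp add: powr_minus_divide)
    have pa: "a powr m > 0" using ap by simp
    have pH: "H powr m > 0" using H by simp
    have "b powr m * a powr (m - 1) = (1 / (a powr m * H powr m)) * (a powr m / a)" by (simp only: e1 e2)
    also have "\<dots> = 1 / (a * H powr m)" using pa pH ap by (simp add: field_simps)
    also have "\<dots> = H powr (- m) * (1 / a)" unfolding e3 by simp
    finally show ?thesis .
  qed
  hence "Cw * (2 powr m * b powr m) * a powr (m - 1) = Cw * 2 powr m * H powr (- m) * (1 / a)"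
    by (metis mult.assoc)
  finally show ?thesis by (simp add: b_def)
qed

lemma energy_num:
  fixes m Cw :: real and W :: "nat \<Rightarrow> real"
  assumes m: "m > 1" and Cw: "Cw > 0" and H: "Hs J0 J1 > 0"
    and hyp: "\<And>n. n \<ge> n1 \<Longrightarrow> W n \<le> Cw * real n powr m * ln (real n) powr (m - 1)"
    and J0: "n1 \<le> 2 ^ J0"
  shows "(\<Sum>j\<in>{J0..<J1}. (bet J0 J1 j / 2 ^ j) powr m * W (2 ^ (j + 1)))
         \<le> Cw * 2 powr m * Hs J0 J1 powr (1 - m)"
proof -
  have "(\<Sum>j\<in>{J0..<J1}. (bet J0 J1 j / 2 ^ j) powr m * W (2 ^ (j + 1)))
      \<le> (\<Sum>j\<in>{J0..<J1}. Cw * 2 powr m * Hs J0 J1 powr (- m) * (1 / real (j + 1)))"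
  proof (rule sum_mono)
    fix j assume j: "j \<in> {J0..<J1}"
    have "(2::nat) ^ J0 \<le> 2 ^ (j + 1)" using j by (intro power_increasing) auto
    hence "n1 \<le> 2 ^ (j + 1)" using J0 by linarith
    hence w: "W (2 ^ (j + 1)) \<le> Cw * real ((2::nat) ^ (j + 1)) powr m * ln (real ((2::nat) ^ (j + 1))) powr (m - 1)"
      by (rule hyp)
    show "(bet J0 J1 j / 2 ^ j) powr m * W (2 ^ (j + 1)) \<le> Cw * 2 powr m * Hs J0 J1 powr (- m) * (1 / real (j + 1))"
      unfolding bet_def by (rule term_bound[OF m Cw H refl w])
  qed
  also have "\<dots> = Cw * 2 powr m * Hs J0 J1 powr (- m) * Hs J0 J1"
    by (simp add: Hs_def sum_distrib_left)
  also have "\<dots> = Cw * 2 powr m * Hs J0 J1 powr (1 - m)"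
  proof -
    have "Hs J0 J1 powr (- m) * Hs J0 J1 = Hs J0 J1 powr (- m) * Hs J0 J1 powr 1" using H by simp
    also have "\<dots> = Hs J0 J1 powr (- m + 1)" by (rule powr_add[symmetric])
    finally have "Hs J0 J1 powr (- m) * Hs J0 J1 = Hs J0 J1 powr (1 - m)" by simp
    then show ?thesis by (simp add: mult.assoc)
  qed
  finally show ?thesis .
qed

lemma Hs_large: "\<exists>J1>J0. Hs J0 J1 \<ge> T"
proof -
  have "eventually (\<lambda>n. harm n \<ge> T + harm J0) sequentially"
    using harm_at_top by (simp add: filterlim_at_top)
  then obtain N where N: "\<And>n. n \<ge> N \<Longrightarrow> harm n \<ge> T + harm J0" by (auto simp: eventually_sequentially)
  define J1 where "J1 = max N (Suc J0)"
  have "Hs J0 J1 = harm J1 - harm J0"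
  proof -
    have "(\<Sum>j<J1. 1 / real (j + 1)) = (\<Sum>j<J0. 1 / real (j + 1)) + (\<Sum>j\<in>{J0..<J1}. 1 / real (j + 1))"
      using J1_def by (subst sum.atLeastLessThan_concat[of 0 J0 J1, symmetric, simplified lessThan_atLeast0[symmetric]]) (auto simp: lessThan_atLeast0)
    then show ?thesis by (simp add: Hs_def harm_altdef inverse_eq_divide)
  qed
  moreover have "harm J1 \<ge> T + harm J0" using N J1_def by simp
  ultimately show ?thesis using J1_def by (intro exI[of _ J1]) auto
qed

lemma solution_props:
  assumes sol: "is_nontrivial_positive_solution adj mu m p q u" and m: "m > 1" and q: "q \<ge> m"
  shows "\<And>x. u x > 0" "\<exists>x y. u x \<noteq> u y" "\<And>x. m_laplacian adj mu m u x \<le> 0"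
proof -
  show "\<And>x. u x > 0" using sol by (simp add: is_nontrivial_positive_solution_def)
  show "\<exists>x y. u x \<noteq> u y" using sol by (simp add: is_nontrivial_positive_solution_def)
  fix x
  have ux: "u x > 0" using sol by (simp add: is_nontrivial_positive_solution_def)
  have qp: "q > 0" "q \<noteq> 0" using m q by auto
  have H: "let g = grad_norm adj mu u x in
            (if g = 0 then
               (if q = 0 then m_laplacian adj mu m u x + u x powr p \<le> 0
                else if q > 0 then m_laplacian adj mu m u x \<le> 0
                else False)
             else m_laplacian adj mu m u x + u x powr p * g powr q \<le> 0)"
    using sol by (simp add: is_nontrivial_positive_solution_def)
  show "m_laplacian adj mu m u x \<le> 0"
  proof (cases "grad_norm adj mu u x = 0")
    case True
    then show ?thesis using H qp by (simp add: Let_def)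
  next
    case False
    hence "m_laplacian adj mu m u x + u x powr p * grad_norm adj mu u x powr q \<le> 0"
      using H by (simp add: Let_def)
    moreover have "u x powr p * grad_norm adj mu u x powr q \<ge> 0" by simp
    ultimately show ?thesis by linarith
  qed
qed

lemma nonconst_edge:
  assumes wg: "weighted_graph adj mu" and ne: "\<exists>x y. u x \<noteq> u y"
  shows "\<exists>x0 y0. adj x0 y0 \<and> u x0 \<noteq> u y0"
proof (rule ccontr)
  assume "\<not> ?thesis"
  hence c: "\<And>a b. adj a b \<Longrightarrow> u a = u b" by blast
  have "\<And>x y. (x, y) \<in> {(a, b). adj a b}\<^sup>* \<Longrightarrow> u x = u y"
  proof -
    fix x y assume "(x, y) \<in> {(a, b). adj a b}\<^sup>*"
    then show "u x = u y" by (induction rule: rtrancl_induct) (auto dest: c)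
  qed
  then show False using ne wg_conn[OF wg] by blast
qed

theorem theorem1p1:
  fixes adj :: "'v \<Rightarrow> 'v \<Rightarrow> bool" and mu :: "'v \<Rightarrow> 'v \<Rightarrow> real"
    and m p q :: real and v0 :: 'v
  assumes "weighted_graph adj mu"
    and "cond_p0 adj mu"
    and "m > 1"
    and "q \<ge> m"
    and "\<exists>C::real. \<exists>n1::nat. C > 0 \<and>
           (\<forall>n\<ge>n1. W_o adj mu v0 n \<le> C * real n powr m * ln (real n) powr (m - 1))"
  shows "\<not> (\<exists>u. is_nontrivial_positive_solution adj mu m p q u)"
proof
  assume "\<exists>u. is_nontrivial_positive_solution adj mu m p q u"
  then obtain u where sol: "is_nontrivial_positive_solution adj mu m p q u" by blast
  have wg: "weighted_graph adj mu" and m: "m > 1" and q: "q \<ge> m" using assms by auto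
  obtain Cw n1 where Cw: "Cw > 0"
    and hyp: "\<And>n. n \<ge> n1 \<Longrightarrow> W_o adj mu v0 n \<le> Cw * real n powr m * ln (real n) powr (m - 1)"
    using assms(5) by blast
  note sp = solution_props[OF sol m q]
  have upos: "\<And>x. u x > 0" by (rule sp(1))
  have Sneg: "\<And>x. (\<Sum>y\<in>{y. adj x y}. mu x y * psi m (u y - u x)) \<le> 0"
    by (rule lap_nonpos[OF wg sp(3)])
  obtain x0 y0 where e: "adj x0 y0" and ne: "u x0 \<noteq> u y0"
    using nonconst_edge[OF wg sp(2)] by blast
  define eps where "eps = mu x0 y0 * ((u x0 powr (1 - m) - u y0 powr (1 - m)) * psi m (u y0 - u x0))"
  have eps_pos: "eps > 0" unfolding eps_def psi_def
    using wg_mupos[OF wg e] edge_pos[OF m upos upos ne] by (rule mult_pos_pos)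
  define K where "K = 2 * Cc m * Cw * 2 powr m"
  have K0: "K \<ge> 0" unfolding K_def using Cc_nonneg[OF m] Cw by simp
  define X where "X = (K + 1) / eps"
  have Xp: "X > 0" using K0 eps_pos by (simp add: X_def)
  define T where "T = X powr (1 / (m - 1))"
  have Tp: "T > 0" using Xp by (simp add: T_def)
  have TX: "T powr (1 - m) = 1 / X"
  proof -
    have "T powr (1 - m) = X powr ((1 / (m - 1)) * (1 - m))" by (simp add: T_def powr_powr)
    also have "(1 / (m - 1)) * (1 - m) = - 1" using m by (simp add: field_simps)
    finally show ?thesis using Xp by (simp add: powr_minus_divide)
  qed
  define J0 where "J0 = gdist adj v0 x0 + gdist adj v0 y0 + n1"
  have J0b: "J0 \<le> 2 ^ J0" using less_exp[of J0] by linarith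
  obtain J1 where J1: "J1 > J0" "Hs J0 J1 \<ge> T" using Hs_large by blast
  have Hp: "Hs J0 J1 > 0" using J1 Tp by linarith
  define N where "N = (2::nat) ^ J1"
  define eta where "eta = (\<lambda>x. fc J0 J1 (gdist adj v0 x))"
  have J01: "(2::nat) ^ J0 \<le> 2 ^ J1" using J1 by (intro power_increasing) auto
  have dx: "gdist adj v0 x0 \<le> 2 ^ J0" and dy: "gdist adj v0 y0 \<le> 2 ^ J0"
    and n1b: "n1 \<le> 2 ^ J0"
  proof -
    have "gdist adj v0 x0 \<le> J0" "gdist adj v0 y0 \<le> J0" "n1 \<le> J0" by (auto simp: J0_def)
    then show "gdist adj v0 x0 \<le> 2 ^ J0" "gdist adj v0 y0 \<le> 2 ^ J0" "n1 \<le> 2 ^ J0"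
      using J0b by linarith+
  qed
  have "eps \<le> Cc m * (\<Sum>(x, y)\<in>{(x, y). gdist adj v0 x \<le> N \<and> gdist adj v0 y \<le> N \<and> adj x y}.
                         mu x y * \<bar>eta x - eta y\<bar> powr m)"
    unfolding eps_def
  proof (rule key[OF wg m upos Sneg])
    show "\<And>x. 0 \<le> eta x" unfolding eta_def using fc_bounds[OF Hp] by simp
    show "\<And>x. N \<le> gdist adj v0 x \<Longrightarrow> eta x = 0" unfolding eta_def N_def by (rule fc_zero)
    show "adj x0 y0" by (rule e)
    show "eta x0 = 1" unfolding eta_def using fc_one[OF Hp dx] .
    show "eta y0 = 1" unfolding eta_def using fc_one[OF Hp dy] .
    show "gdist adj v0 x0 \<le> N" using le_trans[OF dx J01] by (simp add: N_def)
    show "gdist adj v0 y0 \<le> N" using le_trans[OF dy J01] by (simp add: N_def)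
  qed
  also have "(\<Sum>(x, y)\<in>{(x, y). gdist adj v0 x \<le> N \<and> gdist adj v0 y \<le> N \<and> adj x y}.
                         mu x y * \<bar>eta x - eta y\<bar> powr m)
     \<le> 2 * (\<Sum>j\<in>{J0..<J1}. (bet J0 J1 j / 2 ^ j) powr m * W_o adj mu v0 (2 ^ (j + 1)))"
    unfolding eta_def
    by (rule energy[OF wg, where nv = "\<lambda>j. 2 ^ (j + 1)"]) (use m fc_diff_bound[OF Hp] in auto)
  also have "\<dots> \<le> 2 * (Cw * 2 powr m * Hs J0 J1 powr (1 - m))"
    using energy_num[OF m Cw Hp hyp n1b] by simp
  finally have "eps \<le> Cc m * (2 * (Cw * 2 powr m * Hs J0 J1 powr (1 - m)))"
    using Cc_nonneg[OF m] by (simp add: mult_left_mono)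
  hence "eps \<le> K * Hs J0 J1 powr (1 - m)" by (simp add: K_def mult_ac)
  also have "\<dots> \<le> K * T powr (1 - m)"
    using K0 powr_mono2'[of "1 - m" T "Hs J0 J1"] m Tp J1(2) by (intro mult_left_mono) auto
  also have "\<dots> = K * eps / (K + 1)" using TX K0 eps_pos by (simp add: X_def)
  also have "\<dots> < eps" using K0 eps_pos by (simp add: field_simps)
  finally show False by simp
qed

end
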